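(* Let $f\in\mathcal{R}$ with $f(z)=z+\sum_{n=2}^\infty a_nz^n$, and let $\gamma_1=\tfrac12 a_2$, $\gamma_2=\tfrac12\left(a_3-\tfrac12 a_2^2\right)$, $\gamma_3=\tfrac12\left(a_4-a_2a_3+\tfrac13 a_2^3\right)$. Then $|\gamma_m|\le \frac{1}{m+1}$ for $m=1,2,3$, and each bound is attained by some $f\in\mathcal{R}$.
   Context: $\mathbb{D}$ is the open unit disk. $\mathcal{A}$ is the class of holomorphic $f$ on $\mathbb{D}$ with $f(0)=0$, $f'(0)=1$. $\mathcal{R}=\{f\in\mathcal{A}:\operatorname{Re} f'(z)>0\ \text{for all } z\in\mathbb{D}\}$ (functions of bounded turning). The $\gamma_n$ are the logarithmic coefficients defined by $\log(f(z)/z)=2\sum_{n\ge1}\gamma_nz^n$. *)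

theory Defs
  imports "HOL-Complex_Analysis.Complex_Analysis"
begin

definition class_A :: "(complex \<Rightarrow> complex) set" where
  "class_A = {f. f holomorphic_on ball 0 1 \<and> f 0 = 0 \<and> deriv f 0 = 1}"

definition class_R :: "(complex \<Rightarrow> complex) set" where
  "class_R = {f \<in> class_A. \<forall>z\<in>ball 0 1. Re (deriv f z) > 0}"

definition coef :: "(complex \<Rightarrow> complex) \<Rightarrow> nat \<Rightarrow> complex" where
  "coef f n = (deriv ^^ n) f 0 / of_nat (fact n)"

definition log_coef :: "(complex \<Rightarrow> complex) \<Rightarrow> nat \<Rightarrow> complex" where
  "log_coef f m =
     (if m = 1 then coef f 2 / 2
      else if m = 2 then (coef f 3 - (coef f 2)^2 / 2) / 2
      else if m = 3 then (coef f 4 - coef f 2 * coef f 3 + (coef f 2)^3 / 3) / 2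
      else 0)"

end

theory Submission
  imports Defs
begin

lemma exp_ball:
  assumes "g holomorphic_on ball 0 1"
  shows "g has_fps_expansion fps_expansion g 0"
  using assms by (intro has_fps_expansion_fps_expansion) auto

lemma fps_eq_ball:
  fixes f g :: "complex \<Rightarrow> complex"
  assumes "f has_fps_expansion F" "g has_fps_expansion G"
    and "\<And>z. z \<in> ball 0 1 \<Longrightarrow> f z = g z"
  shows "F = G"
proof -
  have ev: "eventually (\<lambda>z. f z = g z) (nhds 0)"
    using eventually_nhds_in_open[of "ball (0::complex) 1" 0] assms(3)
    by (auto elim: eventually_mono)
  have "g has_fps_expansion F"
    using has_fps_expansion_cong[OF ev refl] assms(1) by simp
  then show ?thesis using assms(2) fps_expansion_unique_complex by blast
qed

lemma nth0:
  fixes f :: "complex \<Rightarrow> complex"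
  assumes "f has_fps_expansion F" shows "fps_nth F 0 = f 0"
  using fps_nth_fps_expansion[OF assms, of 0] by simp

lemma schwarz_le:
  assumes holo: "g holomorphic_on ball 0 1" and g0: "g 0 = 0"
    and bd: "\<And>z. z \<in> ball 0 1 \<Longrightarrow> norm (g z) \<le> 1"
  shows "\<And>z. z \<in> ball 0 1 \<Longrightarrow> norm (g z) \<le> norm z" and "norm (deriv g 0) \<le> 1"
proof -
  have S: "norm (of_real r * g z) \<le> norm z \<and> norm (deriv (\<lambda>z. of_real r * g z) 0) \<le> 1"
    if r: "0 < r" "r < 1" and z: "norm z < 1" for r :: real and z
  proof -
    have h: "(\<lambda>z. of_real r * g z) holomorphic_on ball 0 1" using holo by (intro holomorphic_intros)
    have n: "norm (of_real r * g z) < 1" if "norm z < 1" for z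
    proof -
      have "norm (g z) \<le> 1" using bd that by simp
      then have "r * norm (g z) \<le> r" using r by (simp add: mult_left_le)
      moreover have "norm (of_real r * g z) = r * norm (g z)" using r by (simp add: norm_mult)
      ultimately show ?thesis using r by linarith
    qed
    have h0: "(\<lambda>z. of_real r * g z) 0 = 0" using g0 by simp
    show ?thesis using Schwarz_Lemma(1,2)[OF h h0 n z] by simp
  qed
  show "norm (g z) \<le> norm z" if z: "z \<in> ball 0 1" for z
  proof (rule field_le_mult_one_interval)
    fix r :: real assume "0 < r" "r < 1"
    then show "r * norm (g z) \<le> norm z" using S[of r z] z by (simp add: norm_mult)
  qed
  have dif: "g field_differentiable at 0"
    using holomorphic_on_imp_differentiable_at[OF holo] by simp
  show "norm (deriv g 0) \<le> 1"
  proof (rule field_le_mult_one_interval)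
    fix r :: real assume r: "0 < r" "r < 1"
    have "deriv (\<lambda>z. of_real r * g z) 0 = of_real r * deriv g 0"
      using deriv_cmult[OF dif] by simp
    then show "r * norm (deriv g 0) \<le> 1" using S[of r 0] r by (simp add: norm_mult)
  qed
qed

lemma div_lemma:
  assumes holo: "g holomorphic_on ball 0 1" and g0: "g 0 = 0"
    and bd: "\<And>z. z \<in> ball 0 1 \<Longrightarrow> norm (g z) \<le> 1"
  shows "\<exists>h. h holomorphic_on ball 0 1 \<and> (\<forall>z\<in>ball 0 1. g z = z * h z)
           \<and> (\<forall>z\<in>ball 0 1. norm (h z) \<le> 1)"
proof -
  obtain h where hh: "h holomorphic_on ball 0 1" and eq: "\<And>z. norm z < 1 \<Longrightarrow> g z = z * h z"
    and d: "deriv g 0 = h 0"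
    using Schwarz3[OF holo g0] by blast
  have "norm (h z) \<le> 1" if z: "z \<in> ball 0 1" for z
  proof (cases "z = 0")
    case True then show ?thesis using d schwarz_le(2)[OF holo g0 bd] by simp
  next
    case False
    have "norm (z * h z) \<le> norm z" using eq[of z] z schwarz_le(1)[OF holo g0 bd z] by simp
    then show ?thesis using False by (simp add: norm_mult)
  qed
  then show ?thesis using hh eq by auto
qed


lemma mob_ineq:
  fixes a u :: complex
  assumes a: "norm a < 1" and u: "norm u \<le> 1"
  shows "norm (u - a) \<le> norm (1 - cnj a * u)"
proof -
  have id: "norm (1 - cnj a * u)^2 - norm (u - a)^2 = (1 - norm a^2) * (1 - norm u^2)"
    by (simp only: cmod_power2) (simp add: power2_eq_square algebra_simps)
  have "0 \<le> (1 - norm a^2) * (1 - norm u^2)"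
  proof (rule mult_nonneg_nonneg)
    show "0 \<le> 1 - norm a^2" using a by (simp add: abs_square_le_1 less_imp_le)
    show "0 \<le> 1 - norm u^2" using u by (simp add: abs_square_le_1)
  qed
  then have "norm (u - a)^2 \<le> norm (1 - cnj a * u)^2" using id by linarith
  then show ?thesis by (rule power2_le_imp_le) simp
qed

lemma mob0:
  assumes holo: "g holomorphic_on ball 0 1" and bd: "\<And>z. z \<in> ball 0 1 \<Longrightarrow> norm (g z) \<le> 1"
    and a: "norm (g 0) < 1"
  shows "\<exists>q. q holomorphic_on ball 0 1 \<and> (\<forall>z\<in>ball 0 1. norm (q z) \<le> 1) \<and>
     fps_nth (fps_expansion g 0) 1 = of_real (1 - (norm (g 0))^2) * fps_nth (fps_expansion q 0) 0 \<and>
     fps_nth (fps_expansion g 0) 2 = of_real (1 - (norm (g 0))^2) *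
        (fps_nth (fps_expansion q 0) 1 - cnj (g 0) * (fps_nth (fps_expansion q 0) 0)^2)"
proof -
  define a where "a = g 0"
  have an: "norm a < 1" using a a_def by simp
  have den: "1 - cnj a * g z \<noteq> 0" if z: "z \<in> ball 0 1" for z
  proof
    assume "1 - cnj a * g z = 0"
    then have "cnj a * g z = 1" by simp
    then have "norm (cnj a * g z) = 1" by simp
    moreover have "norm (cnj a * g z) \<le> norm a * 1"
      unfolding norm_mult complex_mod_cnj using bd[OF z] by (intro mult_left_mono) auto
    ultimately show False using an by simp
  qed
  define \<psi> where "\<psi> z = (g z - a) / (1 - cnj a * g z)" for z
  have hpsi: "\<psi> holomorphic_on ball 0 1"
    unfolding \<psi>_def using holo den by (intro holomorphic_intros) auto
  have psi0: "\<psi> 0 = 0" by (simp add: \<psi>_def a_def)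
  have bpsi: "norm (\<psi> z) \<le> 1" if z: "z \<in> ball 0 1" for z
    unfolding \<psi>_def norm_divide using mob_ineq[OF an bd[OF z]] den[OF z]
    by (simp add: divide_le_eq_1)
  obtain q where hchi: "q holomorphic_on ball 0 1" and eq: "\<forall>z\<in>ball 0 1. \<psi> z = z * q z"
    and bchi: "\<forall>z\<in>ball 0 1. norm (q z) \<le> 1"
    using div_lemma[OF hpsi psi0 bpsi] by blast
  define G where "G = fps_expansion g 0"
  define P where "P = fps_expansion \<psi> 0"
  define X where "X = fps_expansion q 0"
  have hG: "g has_fps_expansion G" unfolding G_def by (rule exp_ball[OF holo])
  have hP: "\<psi> has_fps_expansion P" unfolding P_def by (rule exp_ball[OF hpsi])
  have hX: "q has_fps_expansion X" unfolding X_def by (rule exp_ball[OF hchi])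
  have e1: "P * (1 - fps_const (cnj a) * G) = G - fps_const a"
  proof (rule fps_eq_ball)
    show "(\<lambda>z. \<psi> z * (1 - cnj a * g z)) has_fps_expansion P * (1 - fps_const (cnj a) * G)"
      by (intro has_fps_expansion_mult has_fps_expansion_diff has_fps_expansion_cmult_left hP hG
           has_fps_expansion_1)
    show "(\<lambda>z. g z - a) has_fps_expansion G - fps_const a"
      by (intro has_fps_expansion_diff hG has_fps_expansion_const)
    show "\<psi> z * (1 - cnj a * g z) = g z - a" if "z \<in> ball 0 1" for z
      using den[OF that] by (simp add: \<psi>_def)
  qed
  have e2: "P = fps_X * X"
  proof (rule fps_eq_ball[OF hP])
    show "(\<lambda>z. z * q z) has_fps_expansion fps_X * X"
      by (intro has_fps_expansion_mult has_fps_expansion_fps_X hX)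
  qed (use eq in auto)
  have G0: "fps_nth G 0 = a" using nth0[OF hG] a_def by simp
  have aa: "cnj a * a = of_real (1 - (1 - norm a ^ 2))"
    using complex_norm_square[of a] by (simp add: mult.commute)
  have c1: "fps_nth (P * (1 - fps_const (cnj a) * G)) 1 = fps_nth (G - fps_const a) 1"
    using e1 by simp
  have c2: "fps_nth (P * (1 - fps_const (cnj a) * G)) 2 = fps_nth (G - fps_const a) 2"
    using e1 by simp
  have c1': "fps_nth X 0 * (1 - cnj a * a) = fps_nth G 1"
    using c1 unfolding e2 by (simp add: fps_mult_nth G0)
  have c2': "fps_nth X 0 * (- (cnj a * fps_nth G 1)) + fps_nth X 1 * (1 - cnj a * a) = fps_nth G 2"
    using c2 unfolding e2 by (simp add: fps_mult_nth G0 numeral_2_eq_2)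
  have aa2: "1 - cnj a * a = of_real (1 - norm a ^ 2)"
    using complex_norm_square[of a] by (simp add: mult.commute)
  show ?thesis
  proof (intro exI conjI)
    show "q holomorphic_on ball 0 1" by (rule hchi)
    show "\<forall>z\<in>ball 0 1. norm (q z) \<le> 1" by (rule bchi)
    show "fps_nth (fps_expansion g 0) 1 = of_real (1 - (norm (g 0))^2) * fps_nth (fps_expansion q 0) 0"
      using c1' aa2 unfolding G_def X_def a_def by (simp add: mult.commute)
    show "fps_nth (fps_expansion g 0) 2 = of_real (1 - (norm (g 0))^2) *
        (fps_nth (fps_expansion q 0) 1 - cnj (g 0) * (fps_nth (fps_expansion q 0) 0)^2)"
    proof -
      have "fps_nth G 2 = fps_nth X 0 * (- (cnj a * (fps_nth X 0 * (1 - cnj a * a)))) + fps_nth X 1 * (1 - cnj a * a)"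
        using c1' c2' by simp
      also have "\<dots> = (1 - cnj a * a) * (fps_nth X 1 - cnj a * (fps_nth X 0)^2)"
        by (simp add: algebra_simps power2_eq_square)
      finally show ?thesis using aa2 by (simp add: G_def X_def a_def)
    qed
  qed
qed


lemma const_case:
  assumes holo: "g holomorphic_on ball 0 1" and bd: "\<And>z. z \<in> ball 0 1 \<Longrightarrow> norm (g z) \<le> 1"
    and a: "\<not> norm (g 0) < 1"
  shows "fps_expansion g 0 = fps_const (g 0)" and "norm (g 0) = 1"
proof -
  show n1: "norm (g 0) = 1" using a bd[of 0] by simp
  have "g constant_on ball 0 1"
    by (rule maximum_modulus_principle[OF holo open_ball connected_ball open_ball subset_refl, of 0])
       (use bd n1 in auto)
  then obtain c where c: "\<And>z. z \<in> ball 0 1 \<Longrightarrow> g z = c" by (auto simp: constant_on_def)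
  have "fps_expansion g 0 = fps_const c"
    by (rule fps_eq_ball[OF exp_ball[OF holo] has_fps_expansion_const]) (use c in auto)
  then show "fps_expansion g 0 = fps_const (g 0)" using c[of 0] by simp
qed

lemma sp1:
  assumes holo: "g holomorphic_on ball 0 1" and bd: "\<And>z. z \<in> ball 0 1 \<Longrightarrow> norm (g z) \<le> 1"
  shows "norm (fps_nth (fps_expansion g 0) 1) \<le> 1 - norm (g 0)^2"
proof (cases "norm (g 0) < 1")
  case True
  obtain q where hq: "q holomorphic_on ball 0 1" and bq: "\<forall>z\<in>ball 0 1. norm (q z) \<le> 1"
    and e: "fps_nth (fps_expansion g 0) 1 = of_real (1 - (norm (g 0))^2) * fps_nth (fps_expansion q 0) 0"
    using mob0[OF holo bd True] by blast
  have q0: "fps_nth (fps_expansion q 0) 0 = q 0" using nth0[OF exp_ball[OF hq]] .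
  have nn: "0 \<le> 1 - norm (g 0)^2" using True by (simp add: abs_square_le_1 less_imp_le)
  have "norm (fps_nth (fps_expansion g 0) 1) = (1 - norm (g 0)^2) * norm (q 0)"
    unfolding e q0 norm_mult norm_of_real using nn by simp
  also have "\<dots> \<le> (1 - norm (g 0)^2) * 1"
    using bq nn by (intro mult_left_mono) auto
  finally show ?thesis by simp
next
  case False
  then show ?thesis using const_case[OF holo bd False] by simp
qed

lemma sp2:
  assumes holo: "g holomorphic_on ball 0 1" and bd: "\<And>z. z \<in> ball 0 1 \<Longrightarrow> norm (g z) \<le> 1"
  shows "\<exists>x y. norm x \<le> 1 \<and> norm y \<le> 1 - norm x ^ 2 \<and>
     fps_nth (fps_expansion g 0) 1 = of_real (1 - (norm (g 0))^2) * x \<and>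
     fps_nth (fps_expansion g 0) 2 = of_real (1 - (norm (g 0))^2) * (y - cnj (g 0) * x^2)"
proof (cases "norm (g 0) < 1")
  case True
  obtain q where hq: "q holomorphic_on ball 0 1" and bq: "\<forall>z\<in>ball 0 1. norm (q z) \<le> 1"
    and e: "fps_nth (fps_expansion g 0) 1 = of_real (1 - (norm (g 0))^2) * fps_nth (fps_expansion q 0) 0"
    and e2: "fps_nth (fps_expansion g 0) 2 = of_real (1 - (norm (g 0))^2) *
        (fps_nth (fps_expansion q 0) 1 - cnj (g 0) * (fps_nth (fps_expansion q 0) 0)^2)"
    using mob0[OF holo bd True] by blast
  have q0: "fps_nth (fps_expansion q 0) 0 = q 0" using nth0[OF exp_ball[OF hq]] .
  have s: "norm (fps_nth (fps_expansion q 0) 1) \<le> 1 - norm (q 0)^2"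
    using sp1[OF hq] bq by auto
  show ?thesis
    by (rule exI[of _ "q 0"], rule exI[of _ "fps_nth (fps_expansion q 0) 1"])
       (use bq s e e2 q0 in auto)
next
  case False
  then show ?thesis using const_case[OF holo bd False] by (intro exI[of _ 0]) simp
qed


lemma re_lt:
  fixes u :: complex
  assumes "Re u > 0"
  shows "norm ((u - 1) / (u + 1)) < 1" and "u + 1 \<noteq> 0"
proof -
  show nz: "u + 1 \<noteq> 0" using assms by (auto simp: complex_eq_iff)
  have "norm (u - 1)^2 < norm (u + 1)^2"
    using assms by (simp only: cmod_power2) (simp add: power2_eq_square algebra_simps)
  then have "norm (u - 1) < norm (u + 1)" by (rule power2_less_imp_less) simp
  then show "norm ((u - 1) / (u + 1)) < 1" using nz by (simp add: norm_divide divide_less_eq_1)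
qed

lemma R_struct:
  assumes "f \<in> class_R"
  shows "\<exists>\<phi>. \<phi> holomorphic_on ball 0 1 \<and> (\<forall>z\<in>ball 0 1. norm (\<phi> z) \<le> 1) \<and>
    coef f 2 = fps_nth (fps_expansion \<phi> 0) 0 \<and>
    coef f 3 = 2/3 * (fps_nth (fps_expansion \<phi> 0) 1 + (fps_nth (fps_expansion \<phi> 0) 0)^2) \<and>
    coef f 4 = (fps_nth (fps_expansion \<phi> 0) 2 + 2 * fps_nth (fps_expansion \<phi> 0) 0 * fps_nth (fps_expansion \<phi> 0) 1
                + (fps_nth (fps_expansion \<phi> 0) 0)^3) / 2"
proof -
  have holo: "f holomorphic_on ball 0 1" and d0: "deriv f 0 = 1"
    and re: "\<And>z. z \<in> ball 0 1 \<Longrightarrow> Re (deriv f z) > 0"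
    using assms by (auto simp: class_R_def class_A_def)
  define F where "F = fps_expansion f 0"
  have hF: "f has_fps_expansion F" unfolding F_def by (rule exp_ball[OF holo])
  have coefF: "coef f n = fps_nth F n" for n
    unfolding coef_def fps_nth_fps_expansion[OF hF] by simp
  define p where "p = deriv f"
  have hp: "p holomorphic_on ball 0 1" unfolding p_def by (rule holomorphic_deriv[OF holo open_ball])
  have hP: "p has_fps_expansion fps_deriv F" unfolding p_def by (rule has_fps_expansion_deriv[OF hF])
  define w where "w z = (p z - 1) / (p z + 1)" for z
  have nz: "p z + 1 \<noteq> 0" if "z \<in> ball 0 1" for z using re_lt(2)[OF re[OF that]] p_def by simp
  have hw: "w holomorphic_on ball 0 1" unfolding w_def using hp nz by (intro holomorphic_intros) auto
  have w0: "w 0 = 0" using d0 by (simp add: w_def p_def)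
  have bw: "norm (w z) \<le> 1" if "z \<in> ball 0 1" for z
    using re_lt(1)[OF re[OF that]] unfolding w_def p_def by simp
  obtain \<phi> where hphi: "\<phi> holomorphic_on ball 0 1" and eq: "\<forall>z\<in>ball 0 1. w z = z * \<phi> z"
    and bphi: "\<forall>z\<in>ball 0 1. norm (\<phi> z) \<le> 1"
    using div_lemma[OF hw w0 bw] by blast
  define \<Phi> where "\<Phi> = fps_expansion \<phi> 0"
  have hPhi: "\<phi> has_fps_expansion \<Phi>" unfolding \<Phi>_def by (rule exp_ball[OF hphi])
  have e1: "(fps_X * \<Phi>) * (fps_deriv F + 1) = fps_deriv F - 1"
  proof (rule fps_eq_ball)
    show "(\<lambda>z. (z * \<phi> z) * (p z + 1)) has_fps_expansion (fps_X * \<Phi>) * (fps_deriv F + 1)"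
      by (intro has_fps_expansion_mult has_fps_expansion_add has_fps_expansion_fps_X hPhi hP
           has_fps_expansion_1)
    show "(\<lambda>z. p z - 1) has_fps_expansion fps_deriv F - 1"
      by (intro has_fps_expansion_diff hP has_fps_expansion_1)
    show "(z * \<phi> z) * (p z + 1) = p z - 1" if "z \<in> ball 0 1" for z
    proof -
      have "w z * (p z + 1) = p z - 1" using nz[OF that] by (simp add: w_def)
      then show ?thesis using eq that by simp
    qed
  qed
  have P0: "fps_nth (fps_deriv F) 0 = 1" using nth0[OF hP] d0 p_def by simp
  have c1: "fps_nth ((fps_X * \<Phi>) * (fps_deriv F + 1)) 1 = fps_nth (fps_deriv F - 1) 1" using e1 by simp
  have c2: "fps_nth ((fps_X * \<Phi>) * (fps_deriv F + 1)) 2 = fps_nth (fps_deriv F - 1) 2" using e1 by simp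
  have c3: "fps_nth ((fps_X * \<Phi>) * (fps_deriv F + 1)) 3 = fps_nth (fps_deriv F - 1) 3" using e1 by simp
  have F1: "fps_nth F 1 = 1" using P0 by simp
  have s3: "{0..3::nat} = {0,1,2,3}" and s2: "{0..2::nat} = {0,1,2}" and s1: "{0..1::nat} = {0,1}" by auto
  have d1: "fps_nth \<Phi> 0 * 2 = 2 * fps_nth F 2"
    using c1 F1 unfolding fps_mult_nth s1 by (simp add: eval_nat_numeral)
  have d2: "fps_nth \<Phi> 0 * (2 * fps_nth F 2) + fps_nth \<Phi> 1 * 2 = 3 * fps_nth F 3"
    using c2 F1 unfolding fps_mult_nth s2 by (simp add: eval_nat_numeral)
  have d3: "fps_nth \<Phi> 0 * (3 * fps_nth F 3) + fps_nth \<Phi> 1 * (2 * fps_nth F 2) + fps_nth \<Phi> 2 * 2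
      = 4 * fps_nth F 4"
    using c3 F1 unfolding fps_mult_nth s3 by (simp add: eval_nat_numeral add.assoc)
  have a2: "fps_nth F 2 = fps_nth \<Phi> 0" using d1 by simp
  have a3: "fps_nth F 3 = 2/3 * (fps_nth \<Phi> 1 + (fps_nth \<Phi> 0)^2)"
    using d2 unfolding a2 by (simp add: field_simps power2_eq_square)
  have a4: "fps_nth F 4 = (fps_nth \<Phi> 2 + 2 * fps_nth \<Phi> 0 * fps_nth \<Phi> 1 + (fps_nth \<Phi> 0)^3) / 2"
  proof -
    have e: "fps_nth F 4 = (fps_nth \<Phi> 0 * (3 * fps_nth F 3) + fps_nth \<Phi> 1 * (2 * fps_nth F 2) + fps_nth \<Phi> 2 * 2) / 4"
      using d3 by (simp add: eq_divide_eq mult.commute)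
    show ?thesis unfolding e a2 a3 by (simp add: field_simps power2_eq_square power3_eq_cube)
  qed
  show ?thesis
    by (rule exI[of _ \<phi>]) (use hphi bphi a2 a3 a4 coefF in \<open>simp add: \<Phi>_def\<close>)
qed


lemma poly_ineq:
  fixes s t :: real
  assumes s: "0 \<le> s" "s \<le> 1" and t: "0 \<le> t" "t \<le> 1"
  shows "(1 - s^2) * (1 - t^2 + s * t^2) / 4 + s * ((1 - s^2) * t) / 6 + s^3 / 12 \<le> 1/4"
proof -
  have id: "1/4 - ((1 - s^2) * (1 - t^2 + s * t^2) / 4 + s * ((1 - s^2) * t) / 6 + s^3 / 12)
        = ((1 + s) * ((1 - s) * t - s / 3)^2 + s^2 * ((8 - 4 * s) / 9)) / 4"
    by (simp add: field_simps power2_eq_square power3_eq_cube)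
  have "0 \<le> (1 + s) * ((1 - s) * t - s/3)^2" using s by simp
  moreover have "0 \<le> s^2 * ((8 - 4 * s) / 9)" using s by simp
  ultimately have "0 \<le> ((1 + s) * ((1 - s) * t - s / 3)^2 + s^2 * ((8 - 4 * s) / 9)) / 4" by simp
  then show ?thesis unfolding id[symmetric] by simp
qed

lemma upper:
  assumes "f \<in> class_R"
  shows "norm (log_coef f 1) \<le> 1/2" and "norm (log_coef f 2) \<le> 1/3" and "norm (log_coef f 3) \<le> 1/4"
proof -
  obtain \<phi> where hphi: "\<phi> holomorphic_on ball 0 1" and bphi: "\<forall>z\<in>ball 0 1. norm (\<phi> z) \<le> 1"
    and c2: "coef f 2 = fps_nth (fps_expansion \<phi> 0) 0"
    and c3: "coef f 3 = 2/3 * (fps_nth (fps_expansion \<phi> 0) 1 + (fps_nth (fps_expansion \<phi> 0) 0)^2)"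
    and c4: "coef f 4 = (fps_nth (fps_expansion \<phi> 0) 2 + 2 * fps_nth (fps_expansion \<phi> 0) 0 * fps_nth (fps_expansion \<phi> 0) 1
                + (fps_nth (fps_expansion \<phi> 0) 0)^3) / 2"
    using R_struct[OF assms] by blast
  define a where "a = \<phi> 0"
  define b where "b = fps_nth (fps_expansion \<phi> 0) 1"
  define c where "c = fps_nth (fps_expansion \<phi> 0) 2"
  have a0: "fps_nth (fps_expansion \<phi> 0) 0 = a" unfolding a_def by (rule nth0[OF exp_ball[OF hphi]])
  have sa: "norm a \<le> 1" using bphi a_def by simp
  note cs = c2[unfolded a0] c3[unfolded a0 b_def[symmetric]] c4[unfolded a0 b_def[symmetric] c_def[symmetric]]
  obtain x y where x: "norm x \<le> 1" and y: "norm y \<le> 1 - norm x ^ 2"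
    and bx: "b = of_real (1 - (norm a)^2) * x" and cy: "c = of_real (1 - (norm a)^2) * (y - cnj a * x^2)"
    using sp2[OF hphi] bphi unfolding a_def b_def c_def by blast
  define s where "s = norm a"
  define r where "r = 1 - s^2"
  have s0: "0 \<le> s" "s \<le> 1" using sa by (auto simp: s_def)
  have r0: "0 \<le> r" using s0 by (simp add: r_def abs_square_le_1)
  have nb: "norm b = r * norm x"
    unfolding bx norm_mult norm_of_real using r0 unfolding r_def s_def by simp
  have nc: "norm c \<le> r * (1 - norm x^2 + s * norm x^2)"
  proof -
    have "norm (y - cnj a * x^2) \<le> norm y + norm (cnj a * x^2)" by (rule norm_triangle_ineq4)
    also have "norm (cnj a * x^2) = s * norm x^2" by (simp add: norm_mult norm_power s_def)
    finally have "norm (y - cnj a * x^2) \<le> 1 - norm x^2 + s * norm x^2" using y by linarith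
    then show ?thesis using r0 unfolding cy r_def[symmetric] s_def[symmetric]
      by (simp add: norm_mult mult_left_mono)
  qed
  show "norm (log_coef f 1) \<le> 1/2" using sa by (simp add: log_coef_def c2 a0 norm_divide)
  have g2: "log_coef f 2 = b/3 + a^2/12"
    by (simp add: log_coef_def cs field_simps power2_eq_square)
  have "norm (log_coef f 2) \<le> norm b / 3 + s^2/12"
    unfolding g2 s_def using norm_triangle_ineq[of "b/3" "a^2/12"] by (simp add: norm_divide norm_power)
  also have "\<dots> \<le> r / 3 + s^2/12" using nb x r0 by (simp add: mult_left_le)
  also have "\<dots> \<le> 1/3"
  proof -
    have "r / 3 + s^2/12 = 1/3 - s^2/4" unfolding r_def by (simp add: field_simps)
    moreover have "0 \<le> s^2" by simp
    ultimately show ?thesis by linarith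
  qed
  finally show "norm (log_coef f 2) \<le> 1/3" .
  have g3: "log_coef f 3 = c/4 + a*b/6 + a^3/12"
    by (simp add: log_coef_def cs field_simps power2_eq_square power3_eq_cube)
  have "norm (log_coef f 3) \<le> norm (c/4) + norm (a*b/6) + norm (a^3/12)"
    unfolding g3 by (rule order_trans[OF norm_triangle_ineq add_right_mono[OF norm_triangle_ineq]])
  also have "\<dots> = norm c / 4 + s * (r * norm x) / 6 + s^3/12"
    by (simp add: norm_divide norm_mult norm_power nb s_def)
  also have "\<dots> \<le> r * (1 - norm x^2 + s * norm x^2) / 4 + s * (r * norm x) / 6 + s^3/12"
    using nc by simp
  also have "\<dots> \<le> 1/4" unfolding r_def by (rule poly_ineq[OF s0 norm_ge_zero x])
  finally show "norm (log_coef f 3) \<le> 1/4" .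
qed


lemma re_pos:
  fixes u :: complex
  assumes "norm u < 1"
  shows "Re ((1 + u) / (1 - u)) > 0"
proof -
  have u2: "Re u ^ 2 + Im u ^ 2 < 1"
    using assms cmod_power2[of u] by (metis abs_norm_cancel abs_square_less_1)
  have nz: "1 - u \<noteq> 0" using assms by auto
  have pos: "0 < norm (1 - u) ^ 2" using nz by simp
  have e1: "Re ((1 + u) / (1 - u)) = ((1 + Re u) * (1 - Re u) + Im u * (- Im u)) / norm (1 - u) ^ 2"
    by (simp add: Re_divide cmod_power2)
  have e2: "(1 + Re u) * (1 - Re u) + Im u * (- Im u) = 1 - Re u ^ 2 - Im u ^ 2"
    by (simp add: power2_eq_square algebra_simps)
  have "0 < 1 - Re u ^ 2 - Im u ^ 2" using u2 by linarith
  then have "0 < (1 - Re u ^ 2 - Im u ^ 2) / norm (1 - u) ^ 2" using pos by (rule divide_pos_pos)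
  then show ?thesis unfolding e1 e2 .
qed

lemma coef_nth:
  assumes "f holomorphic_on ball 0 1"
  shows "coef f n = fps_nth (fps_expansion f 0) n"
  unfolding coef_def fps_nth_fps_expansion[OF exp_ball[OF assms]] by simp

lemma nth_mult_1mX:
  fixes P :: "complex fps"
  shows   "fps_nth (P * (1 - fps_X ^ k)) n = fps_nth P n - (if k \<le> n then fps_nth P (n - k) else 0)"
proof -
  have "P * (1 - fps_X ^ k) = P - P * fps_X ^ k" by (simp add: algebra_simps)
  then show ?thesis by (simp add: fps_X_power_mult_right_nth)
qed

lemma example:
  fixes k :: nat
  assumes k: "k > 0"
  shows "\<exists>f\<in>class_R. \<exists>P. P * (1 - fps_X ^ k) = 1 + fps_X ^ k \<and>
           (\<forall>n. coef f (Suc n) = fps_nth P n / of_nat (Suc n))"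
proof -
  define p where "p z = (1 + z ^ k) / (1 - z ^ k)" for z :: complex
  have lt: "norm (z ^ k) < 1" if "z \<in> ball 0 1" for z :: complex
    using that k by (simp add: norm_power power_less_one_iff)
  have nz: "1 - z ^ k \<noteq> 0" if "z \<in> ball 0 1" for z :: complex
    using lt[OF that] by auto
  have hp: "p holomorphic_on ball 0 1" unfolding p_def using nz by (intro holomorphic_intros) auto
  obtain g where g: "\<And>x. x \<in> ball 0 1 \<Longrightarrow> (g has_field_derivative p x) (at x within ball 0 1)"
    using holomorphic_convex_primitive'[OF convex_ball open_ball hp] by blast
  define f where "f z = g z - g 0" for z
  have fd: "(f has_field_derivative p x) (at x)" if "x \<in> ball 0 1" for x
  proof -
    have "(g has_field_derivative p x) (at x)" using g[OF that] at_within_open[OF that open_ball] by simp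
    then show ?thesis unfolding f_def by (auto intro!: derivative_eq_intros)
  qed
  have holo: "f holomorphic_on ball 0 1"
    unfolding holomorphic_on_open[OF open_ball] using fd by blast
  have df: "deriv f x = p x" if "x \<in> ball 0 1" for x using DERIV_imp_deriv[OF fd[OF that]] .
  have fR: "f \<in> class_R"
    unfolding class_R_def class_A_def
  proof (intro CollectI conjI ballI)
    show "f holomorphic_on ball 0 1" by (rule holo)
    show "f 0 = 0" by (simp add: f_def)
    show "deriv f 0 = 1" using df[of 0] k by (simp add: p_def zero_power)
    show "0 < Re (deriv f z)" if "z \<in> ball 0 1" for z
      using df[OF that] re_pos[OF lt[OF that]] by (simp add: p_def)
  qed
  define F where "F = fps_expansion f 0"
  have hF: "f has_fps_expansion F" unfolding F_def by (rule exp_ball[OF holo])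
  have hP: "p has_fps_expansion fps_expansion p 0" by (rule exp_ball[OF hp])
  have PF: "fps_deriv F = fps_expansion p 0"
    by (rule fps_eq_ball[OF has_fps_expansion_deriv[OF hF] hP]) (use df in auto)
  have e: "fps_expansion p 0 * (1 - fps_X ^ k) = 1 + fps_X ^ k"
  proof (rule fps_eq_ball)
    show "(\<lambda>z. p z * (1 - z ^ k)) has_fps_expansion fps_expansion p 0 * (1 - fps_X ^ k)"
      by (intro has_fps_expansion_mult has_fps_expansion_diff hP has_fps_expansion_1
            has_fps_expansion_fps_X_power)
    show "(\<lambda>z. 1 + z ^ k) has_fps_expansion 1 + fps_X ^ k"
      by (intro has_fps_expansion_add has_fps_expansion_1 has_fps_expansion_fps_X_power)
    show "p z * (1 - z ^ k) = 1 + z ^ k" if "z \<in> ball 0 1" for z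
      using nz[OF that] by (simp add: p_def)
  qed
  have cf: "coef f (Suc n) = fps_nth (fps_expansion p 0) n / of_nat (Suc n)" for n
  proof -
    have "fps_nth (fps_expansion p 0) n = of_nat (Suc n) * fps_nth F (Suc n)"
      unfolding PF[symmetric] by simp
    then show ?thesis using coef_nth[OF holo, of "Suc n"] unfolding F_def
      by (simp del: of_nat_Suc)
  qed
  show ?thesis using fR e cf by blast
qed


lemma example':
  fixes k :: nat
  assumes k: "k > 0"
  obtains f P where "f \<in> class_R"
    "\<And>n. fps_nth P n - (if k \<le> n then fps_nth P (n - k) else 0) = (if n = 0 then 1 else 0) + (if n = k then 1 else 0)"
    "\<And>n. coef f (Suc n) = fps_nth P n / of_nat (Suc n)"
proof -
  obtain f P where fR: "f \<in> class_R" and e: "P * (1 - fps_X ^ k) = 1 + fps_X ^ k"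
    and cf: "\<forall>n. coef f (Suc n) = fps_nth P n / of_nat (Suc n)"
    using example[OF k] by blast
  have "fps_nth P n - (if k \<le> n then fps_nth P (n - k) else 0) = (if n = 0 then 1 else 0) + (if n = k then 1 else 0)" for n
  proof -
    have "fps_nth (P * (1 - fps_X ^ k)) n = fps_nth (1 + fps_X ^ k) n" by (simp only: e)
    then show ?thesis unfolding nth_mult_1mX by simp
  qed
  then show ?thesis using that fR cf by blast
qed

theorem mainTheorem2:
  shows "\<forall>m\<in>{1,2,3::nat}.
           (\<forall>f\<in>class_R. norm (log_coef f m) \<le> 1 / (real m + 1)) \<and>
           (\<exists>f\<in>class_R. norm (log_coef f m) = 1 / (real m + 1))"
proof -
  have ex1: "\<exists>f\<in>class_R. norm (log_coef f 1) = 1 / 2"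
  proof -
    obtain f P where fR: "f \<in> class_R"
      and en: "\<And>n. fps_nth P n - (if 1 \<le> n then fps_nth P (n - 1) else 0) = (if n = 0 then 1 else 0) + (if n = 1 then 1 else 0)"
      and cf: "\<And>n. coef f (Suc n) = fps_nth P n / of_nat (Suc n)"
      using example'[of 1] by auto
    have P0: "fps_nth P 0 = 1" using en[of 0] by simp
    have P1: "fps_nth P 1 = 2" using en[of 1] P0 by simp
    have "coef f 2 = 1" using cf[of 1] P1 by (simp add: numeral_2_eq_2)
    then have L: "log_coef f 1 = 1/2" by (simp add: log_coef_def)
    have "norm (log_coef f 1) = 1/2" unfolding L by (simp add: norm_divide)
    then show ?thesis using fR by blast
  qed
  have ex2: "\<exists>f\<in>class_R. norm (log_coef f 2) = 1 / 3"
  proof -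
    obtain f P where fR: "f \<in> class_R"
      and en: "\<And>n. fps_nth P n - (if 2 \<le> n then fps_nth P (n - 2) else 0) = (if n = 0 then 1 else 0) + (if n = 2 then 1 else 0)"
      and cf: "\<And>n. coef f (Suc n) = fps_nth P n / of_nat (Suc n)"
      using example'[of 2] by auto
    have P0: "fps_nth P 0 = 1" using en[of 0] by simp
    have P1: "fps_nth P 1 = 0" using en[of 1] by simp
    have P2: "fps_nth P 2 = 2" using en[of 2] P0 by simp
    have "coef f 2 = 0" using cf[of 1] P1 by (simp add: numeral_2_eq_2)
    moreover have "coef f 3 = 2/3" using cf[of 2] P2 by (simp add: numeral_3_eq_3)
    ultimately have L: "log_coef f 2 = 1/3" by (simp add: log_coef_def)
    have "norm (log_coef f 2) = 1/3" unfolding L by (simp add: norm_divide)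
    then show ?thesis using fR by blast
  qed
  have ex3: "\<exists>f\<in>class_R. norm (log_coef f 3) = 1 / 4"
  proof -
    obtain f P where fR: "f \<in> class_R"
      and en: "\<And>n. fps_nth P n - (if 3 \<le> n then fps_nth P (n - 3) else 0) = (if n = 0 then 1 else 0) + (if n = 3 then 1 else 0)"
      and cf: "\<And>n. coef f (Suc n) = fps_nth P n / of_nat (Suc n)"
      using example'[of 3] by auto
    have P0: "fps_nth P 0 = 1" using en[of 0] by simp
    have P1: "fps_nth P 1 = 0" using en[of 1] by simp
    have P2: "fps_nth P 2 = 0" using en[of 2] by simp
    have P3: "fps_nth P 3 = 2" using en[of 3] P0 by simp
    have k2: "coef f 2 = 0" using cf[of 1] P1 by (simp add: numeral_2_eq_2)
    have k3: "coef f 3 = 0" using cf[of 2] P2 by (simp add: numeral_3_eq_3)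
    have k4: "coef f 4 = 1/2" using cf[of 3] P3 by (simp add: eval_nat_numeral mult.commute)
    have L: "log_coef f 3 = 1/4" by (simp add: log_coef_def k2 k3 k4)
    have "norm (log_coef f 3) = 1/4" unfolding L by (simp add: norm_divide)
    then show ?thesis using fR by blast
  qed
  show ?thesis
  proof (intro ballI)
    fix m :: nat assume "m \<in> {1,2,3}"
    then consider "m = 1" | "m = 2" | "m = 3" by auto
    then show "(\<forall>f\<in>class_R. norm (log_coef f m) \<le> 1 / (real m + 1)) \<and>
           (\<exists>f\<in>class_R. norm (log_coef f m) = 1 / (real m + 1))"
    proof cases
      case 1 then show ?thesis using upper(1) ex1 by auto
    next
      case 2 then show ?thesis using upper(2) ex2 by auto
    next
      case 3 then show ?thesis using upper(3) ex3 by auto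
    qed
  qed
qed

end
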